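(* Let $\mathcal G=(\mathcal V,\mathcal E,w)$ be a finite, undirected, connected graph with $n\ge2$ vertices and positive edge weights, and let $\hat L$ be its normalized Laplacian. Let $w_1,\dots,w_r$ be the pairwise distinct values taken by the weights of those $(m,k)$-stars of $\mathcal G$ whose weight is defined, and for each $i$ let $\mathcal S_{w_i}$ be the set of $(m,k)$-stars of $\mathcal G$ of weight $w_i$, with $\deg(\mathcal S_{w_i})=\sum_{S_{m,k}\in\mathcal S_{w_i}}(m-1)$. If $r\ge1$, then $1$ is an eigenvalue of $\hat L$ with algebraic multiplicity at least $\sum_{i=1}^r\deg(\mathcal S_{w_i})$.
   Context: Weighted adjacency matrix: $A_{ij}=w(i,j)$ if $\{i,j\}\in\mathcal E$, else $0$; strength $s(i)=\sum_jA_{ij}$. The normalized Laplacian has entries $\hat L_{ii}=1$, $\hat L_{ij}=-w(i,j)/\sqrt{s(i)s(j)}$ if $i\sim j$, and $0$ otherwise. An $(m,k)$-star of $\mathcal G$ is a pair $(\mathcal V_1,\mathcal V_2)$ of disjoint vertex sets with $|\mathcal V_1|=m\ge2$, $|\mathcal V_2|=k$, $m+k\le n$, such that every vertex of $\mathcal V_1$ is adjacent to every vertex of $\mathcal V_2$ and to no vertex outside $\mathcal V_2$; the sets are uniquely determined, i.e. $\mathcal V_1$ is the set of all vertices whose neighbourhood is exactly $\mathcal V_2$. Its degree is $m-1$. Its weight is defined only when $w(i,j)=w(i',j)$ for all $i,i'\in\mathcal V_1$, $j\in\mathcal V_2$, and then equals $\sum_{j\in\mathcal V_2}w(i,j)$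 for any $i\in\mathcal V_1$. *)

theory Defs
  imports "Jordan_Normal_Form.Char_Poly" "Jordan_Normal_Form.Jordan_Normal_Form"
begin

text \<open>Weighted undirected simple graph on the vertex set {0..<n}:
  E is the (symmetric, irreflexive) adjacency relation, w the edge weight
  (only its values on edges matter).\<close>

definition wgraph :: "nat \<Rightarrow> (nat \<Rightarrow> nat \<Rightarrow> bool) \<Rightarrow> (nat \<Rightarrow> nat \<Rightarrow> real) \<Rightarrow> bool" where
  "wgraph n E w \<longleftrightarrow>
     (\<forall>i j. E i j \<longrightarrow> i < n \<and> j < n) \<and>
     (\<forall>i. \<not> E i i) \<and>
     (\<forall>i j. E i j \<longrightarrow> E j i) \<and>
     (\<forall>i j. E i j \<longrightarrow> w i j = w j i \<and> w i j > 0)"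

definition connected_graph :: "nat \<Rightarrow> (nat \<Rightarrow> nat \<Rightarrow> bool) \<Rightarrow> bool" where
  "connected_graph n E \<longleftrightarrow> (\<forall>i<n. \<forall>j<n. E\<^sup>*\<^sup>* i j)"

definition adj_w :: "(nat \<Rightarrow> nat \<Rightarrow> bool) \<Rightarrow> (nat \<Rightarrow> nat \<Rightarrow> real) \<Rightarrow> nat \<Rightarrow> nat \<Rightarrow> real" where
  "adj_w E w i j = (if E i j then w i j else 0)"

definition strength :: "nat \<Rightarrow> (nat \<Rightarrow> nat \<Rightarrow> bool) \<Rightarrow> (nat \<Rightarrow> nat \<Rightarrow> real) \<Rightarrow> nat \<Rightarrow> real" where
  "strength n E w i = (\<Sum>j<n. adj_w E w i j)"

definition norm_laplacian :: "nat \<Rightarrow> (nat \<Rightarrow> nat \<Rightarrow> bool) \<Rightarrow> (nat \<Rightarrow> nat \<Rightarrow> real) \<Rightarrow> real mat" where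
  "norm_laplacian n E w = mat n n (\<lambda>(i, j).
      if i = j then 1
      else if E i j then - w i j / sqrt (strength n E w i * strength n E w j)
      else 0)"

definition nbhd :: "nat \<Rightarrow> (nat \<Rightarrow> nat \<Rightarrow> bool) \<Rightarrow> nat \<Rightarrow> nat set" where
  "nbhd n E i = {j. j < n \<and> E i j}"

text \<open>(m,k)-star (V1,V2): m = card V1 \<ge> 2, k = card V2, disjoint, m + k \<le> n,
  every vertex of V1 is adjacent exactly to the vertices of V2, and V1 is the set
  of all vertices whose neighbourhood is exactly V2.\<close>

definition is_star :: "nat \<Rightarrow> (nat \<Rightarrow> nat \<Rightarrow> bool) \<Rightarrow> nat set \<Rightarrow> nat set \<Rightarrow> bool" where
  "is_star n E V1 V2 \<longleftrightarrow>
     V1 \<subseteq> {0..<n} \<and> V2 \<subseteq> {0..<n} \<and> V1 \<inter> V2 = {} \<and>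
     card V1 \<ge> 2 \<and> card V1 + card V2 \<le> n \<and>
     (\<forall>i\<in>V1. nbhd n E i = V2) \<and>
     V1 = {v. v < n \<and> nbhd n E v = V2}"

definition star_degree :: "nat set \<Rightarrow> nat" where
  "star_degree V1 = card V1 - 1"

definition star_weight_defined :: "(nat \<Rightarrow> nat \<Rightarrow> real) \<Rightarrow> nat set \<Rightarrow> nat set \<Rightarrow> bool" where
  "star_weight_defined w V1 V2 \<longleftrightarrow> (\<forall>i\<in>V1. \<forall>i'\<in>V1. \<forall>j\<in>V2. w i j = w i' j)"

definition star_weight :: "(nat \<Rightarrow> nat \<Rightarrow> real) \<Rightarrow> nat set \<Rightarrow> nat set \<Rightarrow> real" where
  "star_weight w V1 V2 = (\<Sum>j\<in>V2. w (SOME i. i \<in> V1) j)"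

definition weighted_stars :: "nat \<Rightarrow> (nat \<Rightarrow> nat \<Rightarrow> bool) \<Rightarrow> (nat \<Rightarrow> nat \<Rightarrow> real) \<Rightarrow> (nat set \<times> nat set) set" where
  "weighted_stars n E w = {(V1, V2). is_star n E V1 V2 \<and> star_weight_defined w V1 V2}"

definition star_weights :: "nat \<Rightarrow> (nat \<Rightarrow> nat \<Rightarrow> bool) \<Rightarrow> (nat \<Rightarrow> nat \<Rightarrow> real) \<Rightarrow> real set" where
  "star_weights n E w = (\<lambda>(V1, V2). star_weight w V1 V2) ` weighted_stars n E w"

definition stars_of_weight :: "nat \<Rightarrow> (nat \<Rightarrow> nat \<Rightarrow> bool) \<Rightarrow> (nat \<Rightarrow> nat \<Rightarrow> real) \<Rightarrow> real \<Rightarrow> (nat set \<times> nat set) set" where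
  "stars_of_weight n E w x = {S \<in> weighted_stars n E w. star_weight w (fst S) (snd S) = x}"

definition deg_class :: "nat \<Rightarrow> (nat \<Rightarrow> nat \<Rightarrow> bool) \<Rightarrow> (nat \<Rightarrow> nat \<Rightarrow> real) \<Rightarrow> real \<Rightarrow> nat" where
  "deg_class n E w x = (\<Sum>S\<in>stars_of_weight n E w x. star_degree (fst S))"

end

theory Submission
  imports Defs
begin


lemma core_dvd:
  fixes A :: "'a::field mat"
  assumes A: "A \<in> carrier_mat n n" and T: "T \<subseteq> {0..<n}"
    and r: "\<And>j. j \<in> T \<Longrightarrow> r j < j"
    and col: "\<And>j k. j \<in> T \<Longrightarrow> k < n \<Longrightarrow>
       A $$ (k, j) - A $$ (k, r j) = (if k = j then 1 else 0) - (if k = r j then 1 else 0)"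
  shows "[:-1,1:] ^ card T dvd char_poly A"
proof -
  define M where "M = char_poly_matrix A"
  have M: "M \<in> carrier_mat n n" using A unfolding M_def by simp
  have Mij: "M $$ (k,j) = (if k = j then [:0,1:] else 0) - [:A $$ (k,j):]" if "k < n" "j < n" for k j
    using A that unfolding M_def char_poly_matrix_def by auto
  define P where "P = mat n n (\<lambda>(l,j). (if l = j then 1 else 0) - (if j \<in> T \<and> l = r j then 1 else (0::'a poly)))"
  have P: "P \<in> carrier_mat n n" unfolding P_def by simp
  have rn: "r j < n" if "j \<in> T" for j using r[OF that] T that by auto
  have "upper_triangular P" unfolding P_def upper_triangular_def
    using r by (auto dest: r)
  hence detP: "det P = 1"
    apply (subst det_upper_triangular[OF _ P], simp)
    using r unfolding P_def
    by (auto simp: diag_mat_def intro!: prod_list_neutral) (metis less_irrefl r)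
  define G where "G = mat n n (\<lambda>(k,j). if j \<in> T then (if k = j then 1 else if k = r j then -1 else 0) else M $$ (k,j))"
  define D where "D = mat n n (\<lambda>(k,j). if k = j then (if j \<in> T then [:-1,1:] else 1) else (0::'a poly))"
  have G: "G \<in> carrier_mat n n" unfolding G_def by simp
  have D: "D \<in> carrier_mat n n" unfolding D_def by simp
  have MP: "M * P = G * D"
  proof (rule eq_matI)
    fix k j assume k: "k < dim_row (G * D)" and j: "j < dim_col (G * D)"
    hence k: "k < n" and j: "j < n" using G D by auto
    have "(M * P) $$ (k,j) = (\<Sum>l<n. M $$ (k,l) * P $$ (l,j))"
      using M P k j by (simp add: scalar_prod_def lessThan_atLeast0)
    also have "\<dots> = M $$ (k,j) - (if j \<in> T then M $$ (k, r j) else 0)"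
    proof (cases "j \<in> T")
      case True
      thus ?thesis using j rn[OF True] unfolding P_def
        by (simp add: right_diff_distrib sum_subtractf if_distrib[of "(*) _"] cong: if_cong)
    next
      case False
      thus ?thesis using j unfolding P_def
        by (simp add: if_distrib[of "(*) _"] cong: if_cong)
    qed
    also have "\<dots> = G $$ (k,j) * D $$ (j,j)"
    proof (cases "j \<in> T")
      case True
      note c = col[OF True k]
      show ?thesis using True j k rn[OF True] r[OF True] unfolding G_def D_def
        apply (simp add: Mij)
        using c by (auto simp: algebra_simps one_pCons)
    next
      case False
      thus ?thesis using j k unfolding G_def D_def by simp
    qed
    also have "\<dots> = (G * D) $$ (k,j)"
      using G D k j unfolding D_def
      by (simp add: scalar_prod_def if_distrib[of "(*) _"] cong: if_cong)
    finally show "(M * P) $$ (k,j) = (G * D) $$ (k,j)" .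
  qed (insert M P G D, auto)
  have detD: "det D = [:-1,1:] ^ card T"
  proof -
    have "det D = prod_list (diag_mat D)"
      by (rule det_upper_triangular[OF _ D]) (simp add: D_def upper_triangular_def)
    also have "diag_mat D = map (\<lambda>j. if j \<in> T then [:-1,1:] else 1) [0..<n]"
      using D by (auto simp: D_def diag_mat_def)
    also have "prod_list \<dots> = (\<Prod>j\<in>{0..<n}. if j \<in> T then [:-1,1:] else 1)"
      by (subst prod.distinct_set_conv_list[symmetric]) auto
    also have "\<dots> = (\<Prod>j\<in>{0..<n} \<inter> T. [:-1,1:])"
      by (subst prod.inter_restrict) auto
    also have "{0..<n} \<inter> T = T" using T by auto
    finally show ?thesis by simp
  qed
  have "char_poly A = det M" unfolding char_poly_def M_def ..
  also have "\<dots> = det (M * P)" using det_mult[OF M P] detP by simp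
  also have "\<dots> = det G * [:-1,1:] ^ card T" using det_mult[OF G D] detD MP by simp
  finally have "char_poly A = det G * [:-1,1:] ^ card T" .
  thus ?thesis by (metis dvd_triv_right)
qed

lemma star_facts: assumes "is_star n E V1 V2"
  shows "V1 \<subseteq> {0..<n}" "V2 \<subseteq> {0..<n}" "V1 \<inter> V2 = {}" "card V1 \<ge> 2"
    "\<forall>i\<in>V1. nbhd n E i = V2" "V1 = {v. v < n \<and> nbhd n E v = V2}"
proof -
  note h = assms[unfolded is_star_def]
  show "V1 \<subseteq> {0..<n}" by (rule h[THEN conjunct1])
  show "V2 \<subseteq> {0..<n}" by (rule h[THEN conjunct2, THEN conjunct1])
  show "V1 \<inter> V2 = {}" by (rule h[THEN conjunct2, THEN conjunct2, THEN conjunct1])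
  show "card V1 \<ge> 2" by (rule h[THEN conjunct2, THEN conjunct2, THEN conjunct2, THEN conjunct1])
  show "\<forall>i\<in>V1. nbhd n E i = V2"
    by (rule h[THEN conjunct2, THEN conjunct2, THEN conjunct2, THEN conjunct2, THEN conjunct2, THEN conjunct1])
  show "V1 = {v. v < n \<and> nbhd n E v = V2}"
    by (rule h[THEN conjunct2, THEN conjunct2, THEN conjunct2, THEN conjunct2, THEN conjunct2, THEN conjunct2])
qed

lemma star_finite: assumes "is_star n E V1 V2" shows "finite V1"
  by (rule finite_subset[OF star_facts(1)[OF assms]]) simp

lemma nbhd_star:
  assumes st: "is_star n E V1 V2" and j: "j \<in> V1"
  shows "nbhd n E j = V2" "V1 = {v. v < n \<and> nbhd n E v = nbhd n E j}"
proof -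
  show 1: "nbhd n E j = V2" using star_facts(5)[OF st] j by blast
  show "V1 = {v. v < n \<and> nbhd n E v = nbhd n E j}" unfolding 1 by (rule star_facts(6)[OF st])
qed

theorem corollary2:
  fixes n :: nat and E :: "nat \<Rightarrow> nat \<Rightarrow> bool" and w :: "nat \<Rightarrow> nat \<Rightarrow> real"
  assumes "n \<ge> 2"
    and "wgraph n E w"
    and "connected_graph n E"
    and "star_weights n E w \<noteq> {}"
  shows "eigenvalue (norm_laplacian n E w) 1 \<and>
         order 1 (char_poly (norm_laplacian n E w))
           \<ge> (\<Sum>x\<in>star_weights n E w. deg_class n E w x)"
proof -
  note G = assms(2)[unfolded wgraph_def]
  have Gsym: "E a b \<Longrightarrow> E b a" for a b using G[THEN conjunct2, THEN conjunct2, THEN conjunct1] by blast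
  have Gw: "E a b \<Longrightarrow> w a b = w b a" for a b using G[THEN conjunct2, THEN conjunct2, THEN conjunct2] by blast
  define A where "A = norm_laplacian n E w"
  have A: "A \<in> carrier_mat n n" unfolding A_def norm_laplacian_def by simp
  define WS where "WS = weighted_stars n E w"
  have finWS: "finite WS"
  proof (rule finite_subset)
    show "WS \<subseteq> Pow {0..<n} \<times> Pow {0..<n}"
      unfolding WS_def weighted_stars_def using star_facts by blast
  qed auto
  have WSD: "is_star n E V1 V2 \<and> star_weight_defined w V1 V2" if "(V1,V2) \<in> WS" for V1 V2
    using that unfolding WS_def weighted_stars_def by auto
  define T where "T = (\<Union>S\<in>WS. fst S - {Min (fst S)})"
  define r where "r j = Min {v. v < n \<and> nbhd n E v = nbhd n E j}" for j
  have T: "T \<subseteq> {0..<n}" unfolding T_def using WSD star_facts(1) by fastforce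
  have Tinfo: "\<exists>V1 V2. (V1,V2) \<in> WS \<and> j \<in> V1 \<and> r j = Min V1 \<and> Min V1 \<in> V1 \<and> j \<noteq> Min V1"
    if "j \<in> T" for j
  proof -
    from that obtain V1 V2 where S: "(V1,V2) \<in> WS" and j: "j \<in> V1" "j \<noteq> Min V1"
      unfolding T_def by auto
    have st: "is_star n E V1 V2" using WSD[OF S] by auto
    have fin: "finite V1" using star_finite[OF st] .
    have "r j = Min V1" unfolding r_def using nbhd_star(2)[OF st j(1)] by simp
    thus ?thesis using S j Min_in[OF fin] by blast
  qed
  have r: "r j < j" if jT: "j \<in> T" for j
  proof -
    obtain V1 V2 where S: "(V1,V2) \<in> WS" "j \<in> V1" "r j = Min V1" "j \<noteq> Min V1"
      using Tinfo[OF jT] by blast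
    have st: "is_star n E V1 V2" using WSD[OF S(1)] by auto
    have fin: "finite V1" using star_finite[OF st] .
    show ?thesis using S Min_le[OF fin S(2)] by (simp add: order_less_le)
  qed
  have col: "A $$ (k, j) - A $$ (k, r j) = (if k = j then 1 else 0) - (if k = r j then 1 else 0)"
    if jT: "j \<in> T" and k: "k < n" for j k
  proof -
    obtain V1 V2 where S: "(V1,V2) \<in> WS" "j \<in> V1" "r j = Min V1" "Min V1 \<in> V1" "j \<noteq> Min V1"
      using Tinfo[OF jT] by blast
    define i where "i = r j"
    have st: "is_star n E V1 V2" and wd: "star_weight_defined w V1 V2" using WSD[OF S(1)] by auto
    have iV: "i \<in> V1" using S i_def by simp
    have ij: "i \<noteq> j" using S i_def by simp
    have jn: "j < n" and in': "i < n" using star_facts(1-4)[OF st] iV S(2) by auto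
    have nb: "nbhd n E j = V2" "nbhd n E i = V2" using nbhd_star(1)[OF st] iV S(2) by auto
    have disj: "j \<notin> V2" "i \<notin> V2" using star_facts(1-4)[OF st] iV S(2) by auto
    have nbE: "k' \<in> nbhd n E a \<longleftrightarrow> E a k'" if "k' < n" for a k' using that unfolding nbhd_def by simp
    have Ej: "E j k' \<longleftrightarrow> k' \<in> V2" if "k' < n" for k' using nbE[OF that, of j] unfolding nb(1) by simp
    have Ei: "E i k' \<longleftrightarrow> k' \<in> V2" if "k' < n" for k' using nbE[OF that, of i] unfolding nb(2) by simp
    have Esym: "E a b \<longleftrightarrow> E b a" for a b using Gsym by blast
    have weq: "w j k' = w i k'" if "k' \<in> V2" for k' using wd S(2) iV that
      unfolding star_weight_defined_def by blast
    have seq: "strength n E w j = strength n E w i"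
      unfolding strength_def adj_w_def
      by (rule sum.cong, simp) (auto simp: Ej Ei weq)
    have nEij: "\<not> E j i" "\<not> E i j" using Ej[OF in'] Ei[OF jn] disj by auto
    have Wsym: "w a b = w b a" if "E a b" for a b using Gw that by blast
    have wsym: "w k j = w j k" "w k i = w i k" if "k \<in> V2"
      using Wsym[of j k] Wsym[of i k] that Ej[OF k] Ei[OF k] by auto
    have Aent: "A $$ (a,b) = (if a = b then 1 else if E a b then - w a b / sqrt (strength n E w a * strength n E w b) else 0)"
      if "a < n" "b < n" for a b
      using that unfolding A_def norm_laplacian_def by simp
    have "A $$ (k, j) - A $$ (k, i) = (if k = j then 1 else 0) - (if k = i then 1 else 0)"
    proof (cases "k = j")
      case True
      thus ?thesis using Aent[OF k in'] Aent[OF k jn] ij nEij by simp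
    next
      case kj: False
      show ?thesis
      proof (cases "k = i")
        case True
        thus ?thesis using Aent[OF k in'] Aent[OF k jn] ij nEij kj by simp
      next
        case ki: False
        show ?thesis
        proof (cases "k \<in> V2")
          case True
          have "E k j" "E k i" using True Ej[OF k] Ei[OF k] Esym by blast+
          moreover have "w k j = w k i" using wsym[OF True] weq[OF True] by simp
          ultimately show ?thesis using Aent[OF k in'] Aent[OF k jn] kj ki seq by simp
        next
          case False
          have "\<not> E k j" "\<not> E k i" using False Ej[OF k] Ei[OF k] Esym by blast+
          thus ?thesis using Aent[OF k in'] Aent[OF k jn] kj ki by simp
        qed
      qed
    qed
    thus ?thesis unfolding i_def .
  qed
  have dvd: "[:-1,1:] ^ card T dvd char_poly A"
    by (rule core_dvd[OF A T r col])
  have p0: "char_poly A \<noteq> 0" using degree_monic_char_poly[OF A] by auto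
  have ord: "card T \<le> order 1 (char_poly A)"
    using order_max[of 1 "card T" "char_poly A"] dvd p0 by simp
  have cardT: "card T = (\<Sum>S\<in>WS. star_degree (fst S))"
  proof -
    have "card T = (\<Sum>S\<in>WS. card (fst S - {Min (fst S)}))"
      unfolding T_def
    proof (rule card_UN_disjoint[OF finWS])
      show "\<forall>S\<in>WS. finite (fst S - {Min (fst S)})"
        using WSD star_finite by fastforce
      show "\<forall>S\<in>WS. \<forall>S'\<in>WS. S \<noteq> S' \<longrightarrow> (fst S - {Min (fst S)}) \<inter> (fst S' - {Min (fst S')}) = {}"
      proof (intro ballI impI)
        fix S S' assume S: "S \<in> WS" "S' \<in> WS" "S \<noteq> S'"
        obtain V1 V2 V1' V2' where SS: "S = (V1,V2)" "S' = (V1',V2')" by force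
        have st: "is_star n E V1 V2" "is_star n E V1' V2'" using WSD S SS by auto
        show "(fst S - {Min (fst S)}) \<inter> (fst S' - {Min (fst S')}) = {}"
        proof (rule ccontr)
          assume "\<not> ?thesis"
          then obtain x where x: "x \<in> V1" "x \<in> V1'" using SS by auto
          have "V2 = V2'" using nbhd_star(1)[OF st(1) x(1)] nbhd_star(1)[OF st(2) x(2)] by simp
          moreover have "V1 = V1'" using nbhd_star(2)[OF st(1) x(1)] nbhd_star(2)[OF st(2) x(2)] by simp
          ultimately show False using S SS by simp
        qed
      qed
    qed
    also have "\<dots> = (\<Sum>S\<in>WS. star_degree (fst S))"
    proof (rule sum.cong[OF refl])
      fix S assume S: "S \<in> WS"
      obtain V1 V2 where SS: "S = (V1,V2)" by force
      have st: "is_star n E V1 V2" using WSD S SS by auto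
      have fin: "finite V1" using star_finite[OF st] .
      have ne: "V1 \<noteq> {}" using star_facts(4)[OF st] by auto
      show "card (fst S - {Min (fst S)}) = star_degree (fst S)"
        using SS fin Min_in[OF fin ne] by (simp add: star_degree_def)
    qed
    finally show ?thesis .
  qed
  have sumeq: "(\<Sum>x\<in>star_weights n E w. deg_class n E w x) = (\<Sum>S\<in>WS. star_degree (fst S))"
  proof -
    have img: "star_weights n E w = (\<lambda>S. star_weight w (fst S) (snd S)) ` WS"
      unfolding star_weights_def WS_def by (simp add: case_prod_beta')
    show ?thesis
      unfolding img deg_class_def stars_of_weight_def WS_def[symmetric]
      by (rule sum.image_gen[OF finWS, symmetric])
  qed
  have pos: "card T \<ge> 1"
  proof -
    obtain S where S: "S \<in> WS" using assms(4) unfolding star_weights_def WS_def by auto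
    obtain V1 V2 where SS: "S = (V1,V2)" by force
    have st: "is_star n E V1 V2" using WSD S SS by auto
    have "1 \<le> star_degree (fst S)" using star_facts(4)[OF st] SS unfolding star_degree_def by auto
    also have "\<dots> \<le> (\<Sum>S\<in>WS. star_degree (fst S))" by (rule member_le_sum[OF S _ finWS]) auto
    finally show ?thesis using cardT by simp
  qed
  have "poly (char_poly A) 1 = 0" using order_root[of "char_poly A" 1] ord pos p0 by simp
  hence "eigenvalue A 1" using eigenvalue_root_char_poly[OF A] by simp
  thus ?thesis using ord cardT sumeq unfolding A_def by simp
qed

end
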